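(* Let $P(Y)\in R[Y]$ be an $m$-triangular polynomial of degree $d$ and let $k_0,\ldots,k_a\ge0$ be integers. Then the polynomial $P(Y)\prod_{j=0}^a\big(U^{(j)}(Y)\big)^{k_j}$ is $\big(m+\sum_{j=0}^ak_j\big)$-triangular. In particular, if $n=\sum_{j=0}^ak_j$ and $\sum_{j=0}^ajk_j=n$, this polynomial is $(m+n)$-triangular of degree $d+(a-1)n$.
   Context: Fix a positive integer $a$ and variables $u_0,\ldots,u_a$. Let $R=\mathbb{C}[u_0,\ldots,u_{a-1}][u_a,u_a^{-1}]$ and $U(Y)=\sum_{j=0}^au_jY^j\in R[Y]$; $U^{(j)}$ is its $j$-th derivative with respect to $Y$. $\mathbb{Q}_+$ denotes the positive rational numbers. For an integer $m\ge1$, a polynomial $P(Y)=\sum_{l=0}^dp_lY^l\in R[Y]$ of degree $d\ge a$ is called $m$-triangular if for every $l$ with $d-a\le l\le d$ one has $p_l=q_lu_a^{m-1}u_{a-d+l}+P_l(u_{a-d+l+1},\ldots,u_a)$ for some $q_l\in\mathbb{Q}_+$ and some polynomial $P_l\in\mathbb{C}[u_{a-d+l+1},\ldots,u_a]$ (for $l=d$ this means $p_d=q_du_a^m$). *)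

theory Defs
  imports "HOL-Library.Poly_Mapping" "HOL-Computational_Algebra.Polynomial"
begin

text \<open>Laurent polynomials over C in the variables u_0, u_1, ...: a monomial is a finitely
  supported exponent vector nat to int, a Laurent polynomial a finitely supported map from
  monomials to complex coefficients (with convolution product). The ring
  R = C[u_0..u_{a-1}][u_a, u_a^-1] is the subring singled out by in_R.\<close>

type_synonym laurent = "(nat \<Rightarrow>\<^sub>0 int) \<Rightarrow>\<^sub>0 complex"

definition uvar :: "nat \<Rightarrow> laurent" where
  "uvar j = Poly_Mapping.single (Poly_Mapping.single j 1) 1"

definition cst :: "complex \<Rightarrow> laurent" where
  "cst c = Poly_Mapping.single 0 c"

definition in_R :: "nat \<Rightarrow> laurent \<Rightarrow> bool" where
  "in_R a r \<longleftrightarrow> (\<forall>mon \<in> Poly_Mapping.keys r. \<forall>i.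
      (a < i \<longrightarrow> Poly_Mapping.lookup mon i = 0) \<and> (i < a \<longrightarrow> Poly_Mapping.lookup mon i \<ge> 0))"

definition poly_in_vars :: "nat set \<Rightarrow> laurent \<Rightarrow> bool" where
  "poly_in_vars S r \<longleftrightarrow> (\<forall>mon \<in> Poly_Mapping.keys r. \<forall>i. Poly_Mapping.lookup mon i \<noteq> 0 \<longrightarrow> i \<in> S \<and> Poly_Mapping.lookup mon i > 0)"

definition Upoly :: "nat \<Rightarrow> laurent poly" where
  "Upoly a = (\<Sum>j\<le>a. monom (uvar j) j)"

definition m_triangular :: "nat \<Rightarrow> nat \<Rightarrow> laurent poly \<Rightarrow> bool" where
  "m_triangular a m P \<longleftrightarrow>
     m \<ge> 1 \<and> (\<forall>i. in_R a (coeff P i)) \<and> degree P \<ge> a \<and>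
     (\<forall>l. degree P - a \<le> l \<and> l \<le> degree P \<longrightarrow>
        (\<exists>q::rat. q > 0 \<and> (\<exists>Pl. poly_in_vars {a + l - degree P + 1 .. a} Pl \<and>
            (l = degree P \<longrightarrow> Pl = 0) \<and>
            coeff P l = cst (of_rat q) * uvar a ^ (m - 1) * uvar (a + l - degree P) + Pl)))"

end

theory Submission
  imports Defs
begin


definition tc :: "laurent poly \<Rightarrow> nat \<Rightarrow> nat \<Rightarrow> laurent" where
  "tc F D i = (if i \<le> D then coeff F (D - i) else 0)"

lemma tc_mult:
  assumes "degree F \<le> D1" "degree G \<le> D2"
  shows "tc (F*G) (D1+D2) i = (\<Sum>i1\<le>i. tc F D1 i1 * tc G D2 (i-i1))"
proof (cases "i \<le> D1+D2")
  case False
  then have "\<forall>i1\<le>i. tc F D1 i1 * tc G D2 (i-i1) = 0" by (auto simp: tc_def)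
  then have "(\<Sum>i1\<le>i. tc F D1 i1 * tc G D2 (i-i1)) = 0" by (intro sum.neutral) auto
  then show ?thesis using False by (simp add: tc_def del: mult_eq_0_iff)
next
  case True
  define n where "n = D1+D2-i"
  have L: "tc (F*G) (D1+D2) i = (\<Sum>k\<le>n. coeff F k * coeff G (n-k))"
    using True by (simp add: tc_def n_def coeff_mult)
  have L2: "(\<Sum>k\<le>n. coeff F k * coeff G (n-k)) = (\<Sum>k\<in>{k. k\<le>n \<and> k \<le> D1 \<and> n-k \<le> D2}. coeff F k * coeff G (n-k))"
    apply (rule sum.mono_neutral_right)
    using assms by (auto dest!: le_degree)
  have R2: "(\<Sum>i1\<le>i. tc F D1 i1 * tc G D2 (i-i1)) = (\<Sum>i1\<in>{i1. i1\<le>i \<and> i1 \<le> D1 \<and> i-i1 \<le> D2}. coeff F (D1-i1) * coeff G (D2-(i-i1)))"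
    apply (rule sum.mono_neutral_cong_right)
    by (auto simp: tc_def)
  have "(\<Sum>k\<in>{k. k\<le>n \<and> k \<le> D1 \<and> n-k \<le> D2}. coeff F k * coeff G (n-k)) = (\<Sum>i1\<in>{i1. i1\<le>i \<and> i1 \<le> D1 \<and> i-i1 \<le> D2}. coeff F (D1-i1) * coeff G (D2-(i-i1)))"
  proof (rule sum.reindex_bij_witness[of _ "\<lambda>k. D1 - k" "\<lambda>i1. D1 - i1"])
    fix b assume "b \<in> {k. k\<le>n \<and> k \<le> D1 \<and> n-k \<le> D2}"
    then have "D1 - (D1 - b) = b" "D2 - (i - (D1 - b)) = n - b" using True by (auto simp: n_def)
    then show "coeff F (D1 - (D1 - b)) * coeff G (D2 - (i - (D1 - b))) = coeff F b * coeff G (n - b)" by simp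
  qed (use True in \<open>auto simp: n_def\<close>)
  then show ?thesis using L L2 R2 by simp
qed

definition mclosed :: "(nat \<Rightarrow>\<^sub>0 int) set \<Rightarrow> bool" where
  "mclosed M \<longleftrightarrow> 0 \<in> M \<and> (\<forall>x\<in>M. \<forall>y\<in>M. x + y \<in> M)"

definition kin :: "(nat \<Rightarrow>\<^sub>0 int) set \<Rightarrow> laurent \<Rightarrow> bool" where
  "kin M r \<longleftrightarrow> Poly_Mapping.keys r \<subseteq> M"

lemma kin_0[simp]: "kin M 0" by (simp add: kin_def)
lemma kin_add: "kin M r \<Longrightarrow> kin M s \<Longrightarrow> kin M (r + s)"
  using keys_add[of r s] by (auto simp: kin_def)
lemma kin_minus: "kin M r \<Longrightarrow> kin M (- r)"
  by (auto simp: kin_def)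
lemma kin_mult: "mclosed M \<Longrightarrow> kin M r \<Longrightarrow> kin M s \<Longrightarrow> kin M (r * s)"
  using keys_mult[of r s] unfolding kin_def mclosed_def by blast
lemma kin_sum: "(\<And>i. i \<in> I \<Longrightarrow> kin M (f i)) \<Longrightarrow> kin M (sum f I)"
  by (induction I rule: infinite_finite_induct) (auto intro: kin_add)
lemma kin_cst: "mclosed M \<Longrightarrow> kin M (cst c)"
  by (auto simp: kin_def cst_def mclosed_def)
lemma kin_one: "mclosed M \<Longrightarrow> kin M 1"
  by (auto simp: kin_def mclosed_def)
lemma kin_mono: "kin M r \<Longrightarrow> M \<subseteq> N \<Longrightarrow> kin N r"
  by (auto simp: kin_def)
lemma kin_prod: "mclosed M \<Longrightarrow> (\<And>i. i \<in> I \<Longrightarrow> kin M (f i)) \<Longrightarrow> kin M (prod f I)"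
  by (induction I rule: infinite_finite_induct) (auto intro: kin_mult kin_one)
lemma kin_power: "mclosed M \<Longrightarrow> kin M r \<Longrightarrow> kin M (r ^ n)"
  by (induction n) (auto intro: kin_mult kin_one)

definition MR :: "nat \<Rightarrow> (nat \<Rightarrow>\<^sub>0 int) set" where
  "MR a = {mon. \<forall>i. (a < i \<longrightarrow> Poly_Mapping.lookup mon i = 0) \<and> (i < a \<longrightarrow> Poly_Mapping.lookup mon i \<ge> 0)}"
definition MV :: "nat set \<Rightarrow> (nat \<Rightarrow>\<^sub>0 int) set" where
  "MV S = {mon. \<forall>i. Poly_Mapping.lookup mon i \<noteq> 0 \<longrightarrow> i \<in> S \<and> Poly_Mapping.lookup mon i > 0}"

lemma in_R_kin: "in_R a r \<longleftrightarrow> kin (MR a) r"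
  by (auto simp: in_R_def kin_def MR_def)
lemma piv_kin: "poly_in_vars S r \<longleftrightarrow> kin (MV S) r"
  by (auto simp: poly_in_vars_def kin_def MV_def)

lemma MR_closed: "mclosed (MR a)"
  by (auto simp: mclosed_def MR_def lookup_add)

lemma MV_closed: "mclosed (MV S)"
  unfolding mclosed_def MV_def
proof (safe)
  fix x y :: "nat \<Rightarrow>\<^sub>0 int" and i
  assume x: "\<forall>i. Poly_Mapping.lookup x i \<noteq> 0 \<longrightarrow> i \<in> S \<and> 0 < Poly_Mapping.lookup x i"
    and y: "\<forall>i. Poly_Mapping.lookup y i \<noteq> 0 \<longrightarrow> i \<in> S \<and> 0 < Poly_Mapping.lookup y i"
    and ne: "Poly_Mapping.lookup (x + y) i \<noteq> 0"
  have "Poly_Mapping.lookup x i \<noteq> 0 \<or> Poly_Mapping.lookup y i \<noteq> 0" using ne by (auto simp: lookup_add)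
  then show "i \<in> S" using x y by blast
  show "0 < Poly_Mapping.lookup (x + y) i" using x y ne
    by (simp add: lookup_add) (metis add_pos_nonneg add_nonneg_pos add.right_neutral add.left_neutral less_le)
next
  show "\<And>i. Poly_Mapping.lookup (0::nat \<Rightarrow>\<^sub>0 int) i \<noteq> 0 \<Longrightarrow> i \<in> S" by simp
  show "\<And>i. Poly_Mapping.lookup (0::nat \<Rightarrow>\<^sub>0 int) i \<noteq> 0 \<Longrightarrow> 0 < Poly_Mapping.lookup (0::nat \<Rightarrow>\<^sub>0 int) i" by simp
qed

lemma MV_mono: "S \<subseteq> T \<Longrightarrow> MV S \<subseteq> MV T"
  by (auto simp: MV_def)

lemma kin_uvar_MV: "j \<in> S \<Longrightarrow> kin (MV S) (uvar j)"
  by (auto simp: kin_def uvar_def MV_def lookup_single)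
lemma kin_uvar_MR: "j \<le> a \<Longrightarrow> kin (MR a) (uvar j)"
  by (auto simp: kin_def uvar_def MR_def lookup_single)

lemma cst_mult: "cst x * cst y = cst (x * y)"
  by (simp add: cst_def mult_single)
lemma cst_add: "cst x + cst y = cst (x + y)"
  by (simp add: cst_def single_add)
lemma of_nat_cst: "(of_nat n :: laurent) = cst (of_nat n)"
  by (simp add: cst_def)

lemma uvar_pow: "uvar j ^ n = Poly_Mapping.single (Poly_Mapping.single j (int n)) 1"
proof (induction n)
  case 0 then show ?case by simp
next
  case (Suc n)
  then show ?case by (simp add: uvar_def mult_single single_add[symmetric] algebra_simps)
qed

lemma lead_nz: "q \<noteq> 0 \<Longrightarrow> cst (of_rat q) * uvar a ^ e * uvar a \<noteq> 0"
proof -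
  assume q: "q \<noteq> 0"
  have "cst (of_rat q) * uvar a ^ e * uvar a = cst (of_rat q) * uvar a ^ Suc e" by (simp add: algebra_simps)
  also have "\<dots> = Poly_Mapping.single (Poly_Mapping.single a (int (Suc e))) (of_rat q)"
    by (simp only: uvar_pow) (simp add: cst_def mult_single)
  finally show ?thesis using q by (metis lookup_single_eq of_rat_eq_0_iff lookup_zero)
qed

definition tri :: "nat \<Rightarrow> nat \<Rightarrow> nat \<Rightarrow> laurent poly \<Rightarrow> bool \<Rightarrow> bool" where
  "tri a e D F p \<longleftrightarrow> degree F \<le> D \<and> (\<exists>q::rat. q > 0 \<and> tc F D 0 = cst (of_rat q) * uvar a ^ e * uvar a) \<and>
     (\<forall>i. 1 \<le> i \<and> i \<le> a \<longrightarrow> (\<exists>q::rat. q \<ge> 0 \<and> (p \<longrightarrow> q > 0) \<and>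
        (\<exists>Pl. kin (MV {a-i+1..a}) Pl \<and> tc F D i = cst (of_rat q) * uvar a ^ e * uvar (a-i) + Pl)))"

lemma tri_kin:
  assumes "tri a e D F p" "j < i" "i \<le> a"
  shows "kin (MV {a-i+1..a}) (tc F D j)"
proof (cases "j = 0")
  case True
  then obtain q where "tc F D j = cst (of_rat q) * uvar a ^ e * uvar a" using assms unfolding tri_def by blast
  then show ?thesis using assms
    by (auto intro!: kin_mult kin_cst kin_power kin_uvar_MV MV_closed)
next
  case False
  then obtain q Pl where "kin (MV {a-j+1..a}) Pl" "tc F D j = cst (of_rat q) * uvar a ^ e * uvar (a-j) + Pl"
    using assms unfolding tri_def by (meson less_one not_le order.strict_trans2 less_imp_le)
  moreover have "MV {a-j+1..a} \<subseteq> MV {a-i+1..a}" using assms by (intro MV_mono) auto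
  ultimately show ?thesis using assms
    by (auto intro!: kin_add kin_mult kin_cst kin_power kin_uvar_MV MV_closed elim: kin_mono)
qed

lemma sum_split: "1 \<le> (i::nat) \<Longrightarrow> (\<Sum>i1\<le>i. h i1) = h 0 + h i + (\<Sum>i1\<in>{1..<i}. h i1)"
proof -
  assume i: "1 \<le> i"
  have "{..i} = insert 0 (insert i {1..<i})" using i by auto
  then show ?thesis using i by (simp add: add.assoc)
qed

lemma alg0: "((c0::'a::comm_ring_1) * x^e1 * x) * (c1 * x^e2 * x) = (c0*c1) * x^(e1+e2+1) * x"
  by (simp add: algebra_simps power_add)
lemma alg1: "((c0::'a::comm_ring_1) * x^e1 * x) * (c1 * x^e2 * y + p) + (c2 * x^e1 * y + q) * (c3 * x^e2 * x) + m
   = (c0*c1 + c2*c3) * x^(e1+e2+1) * y + (c0 * x^e1 * x * p + q * (c3 * x^e2 * x) + m)"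
  by (simp add: algebra_simps power_add)

lemma tri_mult:
  assumes F: "tri a e1 D1 F p1" and G: "tri a e2 D2 G p2"
  shows "tri a (e1+e2+1) (D1+D2) (F*G) (p1 \<or> p2)"
proof -
  obtain f0 where dF: "degree F \<le> D1" and f0: "f0 > 0" "tc F D1 0 = cst (of_rat f0) * uvar a ^ e1 * uvar a"
    using F unfolding tri_def by blast
  obtain g0 where dG: "degree G \<le> D2" and g0: "g0 > 0" "tc G D2 0 = cst (of_rat g0) * uvar a ^ e2 * uvar a"
    using G unfolding tri_def by blast
  have dFG: "degree (F*G) \<le> D1+D2" using degree_mult_le[of F G] dF dG by linarith
  have lead: "tc (F*G) (D1+D2) 0 = cst (of_rat (f0*g0)) * uvar a ^ (e1+e2+1) * uvar a"
    using tc_mult[OF dF dG, of 0] f0 g0 by (simp add: alg0 cst_mult of_rat_mult)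
  have low: "\<exists>q::rat. q \<ge> 0 \<and> ((p1 \<or> p2) \<longrightarrow> q > 0) \<and>
        (\<exists>Pl. kin (MV {a-i+1..a}) Pl \<and> tc (F*G) (D1+D2) i = cst (of_rat q) * uvar a ^ (e1+e2+1) * uvar (a-i) + Pl)"
    if i: "1 \<le> i" "i \<le> a" for i
  proof -
    obtain fi Pf where fi: "fi \<ge> 0" "p1 \<longrightarrow> fi > 0" "kin (MV {a-i+1..a}) Pf"
        "tc F D1 i = cst (of_rat fi) * uvar a ^ e1 * uvar (a-i) + Pf"
      using F i unfolding tri_def by blast
    obtain gi Pg where gi: "gi \<ge> 0" "p2 \<longrightarrow> gi > 0" "kin (MV {a-i+1..a}) Pg"
        "tc G D2 i = cst (of_rat gi) * uvar a ^ e2 * uvar (a-i) + Pg"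
      using G i unfolding tri_def by blast
    define M where "M = (\<Sum>i1\<in>{1..<i}. tc F D1 i1 * tc G D2 (i-i1))"
    have kM: "kin (MV {a-i+1..a}) M" unfolding M_def
    proof (intro kin_sum kin_mult MV_closed)
      fix j assume j: "j \<in> {1..<i}"
      show "kin (MV {a-i+1..a}) (tc F D1 j)" using tri_kin[OF F, of j i] j i by auto
      show "kin (MV {a-i+1..a}) (tc G D2 (i-j))" using tri_kin[OF G, of "i-j" i] j i by auto
    qed
    have k0: "kin (MV {a-i+1..a}) (tc F D1 0)" "kin (MV {a-i+1..a}) (tc G D2 0)"
      using tri_kin[OF F, of 0 i] tri_kin[OF G, of 0 i] i by auto
    have "tc (F*G) (D1+D2) i = tc F D1 0 * tc G D2 i + tc F D1 i * tc G D2 0 + M"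
      using tc_mult[OF dF dG, of i] sum_split[OF i(1), of "\<lambda>i1. tc F D1 i1 * tc G D2 (i - i1)"] unfolding M_def by simp
    also have "\<dots> = cst (of_rat (f0*gi + fi*g0)) * uvar a ^ (e1+e2+1) * uvar (a-i)
        + (cst (of_rat f0) * uvar a ^ e1 * uvar a * Pg + Pf * (cst (of_rat g0) * uvar a ^ e2 * uvar a) + M)"
      unfolding f0(2) g0(2) fi(4) gi(4) alg1 by (simp add: cst_mult cst_add of_rat_mult of_rat_add)
    finally have eq: "tc (F*G) (D1+D2) i = \<dots>" .
    have kP: "kin (MV {a-i+1..a}) (cst (of_rat f0) * uvar a ^ e1 * uvar a * Pg + Pf * (cst (of_rat g0) * uvar a ^ e2 * uvar a) + M)"
      using k0 f0(2) g0(2) fi(3) gi(3) kM by (metis kin_add kin_mult MV_closed)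
    show ?thesis
    proof (intro exI conjI)
      show "0 \<le> f0*gi + fi*g0" using f0 g0 fi gi by simp
      show "p1 \<or> p2 \<longrightarrow> 0 < f0*gi + fi*g0" using f0 g0 fi gi
        by (metis add_pos_nonneg add_nonneg_pos mult_nonneg_nonneg mult_pos_pos less_imp_le)
    qed (use eq kP in auto)
  qed
  show ?thesis unfolding tri_def
    using dFG lead low f0(1) g0(1) by (metis mult_pos_pos)
qed



lemma coeff_pderiv_iter: "\<exists>c>0. coeff ((pderiv ^^ j) p) n = of_nat c * coeff p (n+j)"
proof (induction j arbitrary: n)
  case 0 then show ?case by (intro exI[of _ 1]) simp
next
  case (Suc j)
  obtain c where c: "c > 0" "coeff ((pderiv ^^ j) p) (Suc n) = of_nat c * coeff p (Suc n + j)" using Suc by blast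
  have "coeff ((pderiv ^^ Suc j) p) n = of_nat (Suc n * c) * coeff p (n + Suc j)"
    by (simp add: coeff_pderiv c(2) algebra_simps)
  then show ?case using c(1) by (intro exI[of _ "Suc n * c"]) simp
qed

lemma coeff_Upoly: "coeff (Upoly a) i = (if i \<le> a then uvar i else 0)"
  by (simp add: Upoly_def coeff_sum coeff_monom)

definition allR :: "nat \<Rightarrow> laurent poly \<Rightarrow> bool" where
  "allR a F \<longleftrightarrow> (\<forall>i. kin (MR a) (coeff F i))"

lemma allR_mult: "allR a F \<Longrightarrow> allR a G \<Longrightarrow> allR a (F * G)"
  unfolding allR_def coeff_mult by (auto intro!: kin_sum kin_mult MR_closed)
lemma allR_one: "allR a 1"
  unfolding allR_def by (auto simp: coeff_1 intro: kin_one MR_closed)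
lemma allR_power: "allR a F \<Longrightarrow> allR a (F ^ n)"
  by (induction n) (auto intro: allR_mult allR_one)
lemma allR_prod: "(\<And>j. j \<in> A \<Longrightarrow> allR a (G j)) \<Longrightarrow> allR a (\<Prod>j\<in>A. G j)"
  by (induction A rule: infinite_finite_induct) (auto intro: allR_mult allR_one)

lemma U_allR: "allR a ((pderiv ^^ j) (Upoly a))"
  unfolding allR_def
proof
  fix n
  obtain c where c: "coeff ((pderiv ^^ j) (Upoly a)) n = of_nat c * coeff (Upoly a) (n+j)"
    using coeff_pderiv_iter by blast
  show "kin (MR a) (coeff ((pderiv ^^ j) (Upoly a)) n)"
    unfolding c coeff_Upoly of_nat_cst
    by (auto intro!: kin_mult kin_cst kin_uvar_MR MR_closed)
qed

lemma U_tri: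
  assumes j: "j \<le> a"
  shows "tri a 0 (a-j) ((pderiv ^^ j) (Upoly a)) False"
proof -
  let ?U = "(pderiv ^^ j) (Upoly a)"
  have cf: "\<exists>c>0. coeff ?U n = of_nat c * (if n + j \<le> a then uvar (n+j) else 0)" for n
    using coeff_pderiv_iter[of j "Upoly a" n] by (simp add: coeff_Upoly)
  have deg: "degree ?U \<le> a - j"
  proof (rule degree_le, intro allI impI)
    fix n assume "a - j < n"
    then show "coeff ?U n = 0" using cf[of n] j by auto
  qed
  have lead: "\<exists>q::rat. q > 0 \<and> tc ?U (a-j) 0 = cst (of_rat q) * uvar a ^ 0 * uvar a"
  proof -
    obtain c where c: "c > 0" "coeff ?U (a-j) = of_nat c * (if a - j + j \<le> a then uvar (a-j+j) else 0)"
      using cf by blast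
    show ?thesis using c j by (intro exI[of _ "of_nat c"]) (simp add: tc_def of_nat_cst)
  qed
  have low: "\<exists>q::rat. q \<ge> 0 \<and> (False \<longrightarrow> q > 0) \<and>
        (\<exists>Pl. kin (MV {a-i+1..a}) Pl \<and> tc ?U (a-j) i = cst (of_rat q) * uvar a ^ 0 * uvar (a-i) + Pl)"
    if i: "1 \<le> i" "i \<le> a" for i
  proof (cases "i \<le> a - j")
    case True
    obtain c where c: "c > 0" "coeff ?U (a-j-i) = of_nat c * (if a - j - i + j \<le> a then uvar (a-j-i+j) else 0)"
      using cf by blast
    have "a - j - i + j = a - i" using True j by simp
    then have "tc ?U (a-j) i = cst (of_rat (of_nat c)) * uvar a ^ 0 * uvar (a-i) + 0"
      using c True by (simp add: tc_def of_nat_cst)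
    then show ?thesis by (intro exI[of _ "of_nat c"] conjI exI[of _ 0]) auto
  next
    case False
    then have "tc ?U (a-j) i = cst (of_rat 0) * uvar a ^ 0 * uvar (a-i) + 0"
      by (simp add: tc_def cst_def)
    then show ?thesis by (intro exI[of _ 0] conjI exI[of _ 0]) auto
  qed
  show ?thesis unfolding tri_def using deg lead low by blast
qed

lemma tri_power: "tri a 0 D F p \<Longrightarrow> tri a k (Suc k * D) (F ^ Suc k) p"
proof (induction k)
  case 0 then show ?case by simp
next
  case (Suc k)
  have "tri a (k + 0 + 1) (Suc k * D + D) (F ^ Suc k * F) (p \<or> p)"
    by (rule tri_mult[OF Suc.IH[OF Suc.prems] Suc.prems])
  moreover have "k + 0 + 1 = Suc k" "Suc k * D + D = Suc (Suc k) * D" "F ^ Suc k * F = F ^ Suc (Suc k)" "(p \<or> p) = p"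
    by (simp_all add: power_Suc2[symmetric] del: power_Suc)
  ultimately show ?case by (simp only:)
qed

lemma tri_prod:
  assumes "finite A" "A \<noteq> {}" "\<And>j. j \<in> A \<Longrightarrow> tri a (e j) (D j) (G j) False"
  shows "tri a ((\<Sum>j\<in>A. Suc (e j)) - 1) (\<Sum>j\<in>A. D j) (\<Prod>j\<in>A. G j) False"
  using assms
proof (induction A rule: finite_ne_induct)
  case (singleton x) then show ?case by simp
next
  case (insert x A)
  have T: "tri a (e x + ((\<Sum>j\<in>A. Suc (e j)) - 1) + 1) (D x + (\<Sum>j\<in>A. D j)) (G x * (\<Prod>j\<in>A. G j)) (False \<or> False)"
  proof (rule tri_mult)
    show "tri a (e x) (D x) (G x) False" using insert.prems by simp
    show "tri a ((\<Sum>j\<in>A. Suc (e j)) - 1) (sum D A) (prod G A) False"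
      using insert.IH insert.prems by simp
  qed
  obtain y where "y \<in> A" using insert(2) by blast
  then have ge: "Suc (e y) \<le> (\<Sum>j\<in>A. Suc (e j))" using insert(1) by (intro member_le_sum) auto
  have s: "(\<Sum>j\<in>insert x A. Suc (e j)) = Suc (e x) + (\<Sum>j\<in>A. Suc (e j))"
    "(\<Sum>j\<in>insert x A. D j) = D x + (\<Sum>j\<in>A. D j)"
    "(\<Prod>j\<in>insert x A. G j) = G x * (\<Prod>j\<in>A. G j)"
    using insert(1,3) by simp_all
  have eq: "e x + ((\<Sum>j\<in>A. Suc (e j)) - 1) + 1 = (\<Sum>j\<in>insert x A. Suc (e j)) - 1"
    unfolding s(1) using ge by linarith
  show ?case using T unfolding s(2,3) eq by simp
qed

lemma mtri_to_tri:
  assumes "m_triangular a m P"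
  shows "tri a (m-1) (degree P) P True"
proof -
  let ?d = "degree P"
  have da: "a \<le> ?d" using assms unfolding m_triangular_def by blast
  have H: "\<And>l. ?d - a \<le> l \<Longrightarrow> l \<le> ?d \<Longrightarrow> (\<exists>q::rat. q > 0 \<and> (\<exists>Pl. poly_in_vars {a + l - ?d + 1 .. a} Pl \<and>
            (l = ?d \<longrightarrow> Pl = 0) \<and>
            coeff P l = cst (of_rat q) * uvar a ^ (m - 1) * uvar (a + l - ?d) + Pl))"
    using assms unfolding m_triangular_def by blast
  have lead: "\<exists>q::rat. q > 0 \<and> tc P ?d 0 = cst (of_rat q) * uvar a ^ (m-1) * uvar a"
    using H[of ?d] by (auto simp: tc_def)
  have low: "\<exists>q::rat. q \<ge> 0 \<and> (True \<longrightarrow> q > 0) \<and>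
        (\<exists>Pl. kin (MV {a-i+1..a}) Pl \<and> tc P ?d i = cst (of_rat q) * uvar a ^ (m-1) * uvar (a-i) + Pl)"
    if i: "1 \<le> i" "i \<le> a" for i
  proof -
    have e: "a + (?d - i) - ?d = a - i" using i da by simp
    obtain q Pl where "q > 0" "poly_in_vars {a - i + 1 .. a} Pl"
      "coeff P (?d - i) = cst (of_rat q) * uvar a ^ (m - 1) * uvar (a - i) + Pl"
      using H[of "?d - i", OF diff_le_mono2[OF i(2)] diff_le_self] unfolding e by blast
    then show ?thesis using i da by (intro exI[of _ q]) (auto simp: tc_def piv_kin)
  qed
  show ?thesis unfolding tri_def using lead low by auto
qed

lemma tri_to_mtri:
  assumes T: "tri a e D F True" and R: "allR a F" and Da: "a \<le> D"
  shows "m_triangular a (Suc e) F \<and> degree F = D"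
proof -
  obtain q0 where dF: "degree F \<le> D" and q0: "q0 > 0" "tc F D 0 = cst (of_rat q0) * uvar a ^ e * uvar a"
    using T unfolding tri_def by blast
  have "coeff F D \<noteq> 0" using q0 lead_nz[of q0 a e] by (simp add: tc_def)
  then have dD: "degree F = D" using dF le_degree by (meson antisym)
  have main: "\<exists>q::rat. q > 0 \<and> (\<exists>Pl. poly_in_vars {a + l - D + 1 .. a} Pl \<and>
            (l = D \<longrightarrow> Pl = 0) \<and>
            coeff F l = cst (of_rat q) * uvar a ^ (Suc e - 1) * uvar (a + l - D) + Pl)"
    if l: "D - a \<le> l" "l \<le> D" for l
  proof (cases "l = D")
    case True
    then show ?thesis using q0 by (intro exI[of _ q0]) (auto simp: tc_def poly_in_vars_def)
  next
    case False
    define i where "i = D - l"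
    have i: "1 \<le> i" "i \<le> a" "l = D - i" "a + l - D = a - i" using l False Da by (auto simp: i_def)
    obtain q Pl where "q > 0" "kin (MV {a-i+1..a}) Pl" "tc F D i = cst (of_rat q) * uvar a ^ e * uvar (a-i) + Pl"
      using T i(1,2) unfolding tri_def by blast
    then show ?thesis using i False Da by (intro exI[of _ q]) (auto simp: tc_def piv_kin)
  qed
  show ?thesis unfolding m_triangular_def using dD Da R main
    by (auto simp: allR_def in_R_kin)
qed



theorem mainTheorem5:
  fixes a m d :: nat and P :: "laurent poly" and k :: "nat \<Rightarrow> nat"
  assumes "a > 0"
    and "m_triangular a m P"
    and "degree P = d"
  shows "m_triangular a (m + (\<Sum>j\<le>a. k j)) (P * (\<Prod>j\<le>a. ((pderiv ^^ j) (Upoly a)) ^ k j)) \<and>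
         (\<forall>n. n = (\<Sum>j\<le>a. k j) \<and> (\<Sum>j\<le>a. j * k j) = n \<longrightarrow>
           m_triangular a (m + n) (P * (\<Prod>j\<le>a. ((pderiv ^^ j) (Upoly a)) ^ k j)) \<and>
           degree (P * (\<Prod>j\<le>a. ((pderiv ^^ j) (Upoly a)) ^ k j)) = d + (a - 1) * n)"
proof -
  define U where "U j = (pderiv ^^ j) (Upoly a)" for j
  define Q where "Q = (\<Prod>j\<le>a. U j ^ k j)"
  define K where "K = (\<Sum>j\<le>a. k j)"
  define DQ where "DQ = (\<Sum>j\<le>a. k j * (a - j))"
  have mt: "m_triangular a m P" by (rule assms(2))
  have m1: "m \<ge> 1" and da: "a \<le> d" and RP: "allR a P"
    using mt assms(3) unfolding m_triangular_def allR_def by (auto simp: in_R_kin)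
  have RQ: "allR a Q" unfolding Q_def U_def
    by (intro allR_prod allR_power U_allR)
  have key: "m_triangular a (m+K) (P*Q) \<and> degree (P*Q) = d + DQ"
  proof (cases "K = 0")
    case True
    then have "\<forall>j\<le>a. k j = 0" by (simp add: K_def)
    then have "Q = 1" "DQ = 0" by (simp_all add: Q_def DQ_def)
    then show ?thesis using assms True by simp
  next
    case False
    define A where "A = {j\<in>{..a}. k j \<noteq> 0}"
    have fA: "finite A" unfolding A_def by simp
    have KA0: "K = (\<Sum>j\<in>A. k j)" unfolding K_def A_def
      by (rule sum.mono_neutral_right) auto
    then have nA: "A \<noteq> {}" using False by auto
    have QA: "Q = (\<Prod>j\<in>A. U j ^ k j)" unfolding Q_def A_def
      by (rule prod.mono_neutral_right) auto
    have DA: "DQ = (\<Sum>j\<in>A. Suc (k j - 1) * (a - j))"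
    proof -
      have "DQ = (\<Sum>j\<in>A. k j * (a - j))" unfolding DQ_def A_def
        by (rule sum.mono_neutral_right) auto
      also have "\<dots> = (\<Sum>j\<in>A. Suc (k j - 1) * (a - j))"
        by (rule sum.cong) (auto simp: A_def)
      finally show ?thesis .
    qed
    have KA: "K = (\<Sum>j\<in>A. Suc (k j - 1))" unfolding KA0
      by (rule sum.cong) (auto simp: A_def)
    have QA': "Q = (\<Prod>j\<in>A. U j ^ Suc (k j - 1))" unfolding QA
      by (rule prod.cong) (auto simp: A_def)
    have TQ: "tri a (K - 1) DQ Q False"
      unfolding KA DA QA'
    proof (rule tri_prod[OF fA nA])
      fix j assume "j \<in> A"
      then have "j \<le> a" by (simp add: A_def)
      then show "tri a (k j - 1) (Suc (k j - 1) * (a - j)) (U j ^ Suc (k j - 1)) False"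
        unfolding U_def by (intro tri_power U_tri)
    qed
    have TP: "tri a (m-1) d P True" using mtri_to_tri[OF mt] assms(3) by simp
    have T0: "tri a (m-1 + (K-1) + 1) (d+DQ) (P*Q) (True \<or> False)" by (rule tri_mult[OF TP TQ])
    have e: "m-1 + (K-1) + 1 = m + K - 1" using m1 False by simp
    have T: "tri a (m+K-1) (d+DQ) (P*Q) True" using T0 unfolding e by simp
    have "m_triangular a (Suc (m+K-1)) (P*Q) \<and> degree (P*Q) = d + DQ"
      using da by (intro tri_to_mtri[OF T] allR_mult RP RQ) simp
    moreover have "Suc (m+K-1) = m+K" using m1 by simp
    ultimately show ?thesis by simp
  qed
  have DQn: "DQ = (a-1)*K" if h: "(\<Sum>j\<le>a. j * k j) = K"
  proof -
    have "DQ + (\<Sum>j\<le>a. j * k j) = (\<Sum>j\<le>a. k j * (a - j) + j * k j)" unfolding DQ_def by (simp add: sum.distrib)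
    also have "\<dots> = (\<Sum>j\<le>a. a * k j)" by (rule sum.cong) (auto simp: algebra_simps diff_mult_distrib2)
    also have "\<dots> = a * K" by (simp add: K_def sum_distrib_left)
    finally have "DQ + K = a * K" using h by simp
    then show ?thesis by (simp add: diff_mult_distrib)
  qed
  show ?thesis using key DQn unfolding Q_def U_def K_def by auto
qed

end
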